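(* Let $\beta\in(1,2)$. There exists a positive constant $C$, independent of $h$ and $\psi$, such that for every grid function $\psi$ as in the context, $$C\Big(\frac{2}{\pi}\Big)^{\beta}\frac{2^{\frac{\beta-2}{2}}}{4\pi^2}\,\|\psi\|^2_{L^2_h}\le\big((-\Delta_h)^{\frac{\beta}{2}}\psi,\psi\big)_{h^2}\le 2^{\frac{\beta}{2}}\frac{\pi^{\beta}}{h^{\beta}}\,\|\psi\|^2_{L^2_h}.$$
   Context: Let $L>0$, $M\in\mathbb{Z}^+$, $h=2L/M$, $x_j=-L+jh$, $y_k=-L+kh$. Consider grid functions $\psi=\{\psi_{jk}\}_{j,k\in\mathbb{Z}}$ with $\psi_{jk}=0$ unless $1\le j,k\le M-1$ (i.e. vanishing on the boundary of $(-L,L)^2$ and outside it). The inner product and norm are $(w,v)_{h^2}=h^2\sum_{j=1}^{M-1}\sum_{k=1}^{M-1}w_{jk}v_{jk}$, $\|w\|^2_{L^2_h}=(w,w)_{h^2}$. The fractional centered difference operator is $$\big((-\Delta_h)^{\frac{\beta}{2}}\psi\big)_{jk}=\frac{1}{h^\beta}\sum_{l,m\in\mathbb{Z}}a^{(\beta)}_{l,m}\psi_{j+l,k+m},\qquad a^{(\beta)}_{l,m}=\frac{1}{4\pi^2}\int_{-\pi}^{\pi}\!\!\int_{-\pi}^{\pi}\Big[4\sin^2\tfrac{\eta_1}{2}+4\sin^2\tfrac{\eta_2}{2}\Big]^{\frac{\beta}{2}}e^{-\mathbf{i}(\eta_1 l+\eta_2 m)}\,d\eta_1 d\eta_2 .$$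 *)

theory Defs
  imports "HOL-Analysis.Analysis"
begin

definition frac_coeff :: "real \<Rightarrow> int \<Rightarrow> int \<Rightarrow> complex" where
  "frac_coeff \<beta> l m =
     complex_of_real (1 / (4 * pi^2)) *
     integral (cbox (-pi, -pi) (pi, pi))
       (\<lambda>(e1::real, e2::real).
          complex_of_real ((4 * (sin (e1/2))^2 + 4 * (sin (e2/2))^2) powr (\<beta>/2)) *
          exp (- \<i> * complex_of_real (e1 * of_int l + e2 * of_int m)))"

definition frac_lap :: "real \<Rightarrow> real \<Rightarrow> (int \<Rightarrow> int \<Rightarrow> real) \<Rightarrow> int \<Rightarrow> int \<Rightarrow> complex" where
  "frac_lap \<beta> h \<psi> j k =
     complex_of_real (1 / h powr \<beta>) *
     infsum (\<lambda>(l, m). frac_coeff \<beta> l m * complex_of_real (\<psi> (j + l) (k + m))) UNIV"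

definition grid_inner :: "real \<Rightarrow> nat \<Rightarrow> (int \<Rightarrow> int \<Rightarrow> 'a::{real_algebra_1,comm_ring_1})
    \<Rightarrow> (int \<Rightarrow> int \<Rightarrow> 'a) \<Rightarrow> 'a" where
  "grid_inner h M w v =
     of_real (h^2) * (\<Sum>j = 1..int M - 1. \<Sum>k = 1..int M - 1. w j k * v j k)"

end

theory Submission
  imports Defs
begin


lemma int1d:
  fixes n :: int and c :: real
  shows "integral {-pi..pi} (\<lambda>y. cos (c + y * of_int n)) = (if n = 0 then 2 * pi * cos c else 0)"
proof (cases "n = 0")
  case True
  then show ?thesis by (simp add: content_real)
next
  case False
  have d: "((\<lambda>y. sin (c + y * of_int n) / of_int n) has_vector_derivative cos (c + y * of_int n)) (at y within {-pi..pi})" for y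
    unfolding has_real_derivative_iff_has_vector_derivative[symmetric]
    using False by (auto intro!: derivative_eq_intros)
  have "((\<lambda>y. cos (c + y * of_int n)) has_integral
        (sin (c + pi * of_int n) / of_int n - sin (c + - pi * of_int n) / of_int n)) {-pi..pi}"
    using fundamental_theorem_of_calculus[of "-pi" pi, OF _ d] by simp
  moreover have "sin (c + pi * of_int n) = sin (c + - pi * of_int n)"
    by (simp only: sin_add sin_minus cos_minus mult_minus_left sin_npi_int)
  ultimately show ?thesis using False by (simp add: integral_unique)
qed

lemma int2d:
  fixes a b :: int
  shows "integral (cbox (-pi,-pi) (pi,pi)) (\<lambda>e::real\<times>real. cos (fst e * of_int a + snd e * of_int b))
       = (if a = 0 \<and> b = 0 then 4 * pi^2 else 0)"
proof -
  have "integral (cbox (-pi,-pi) (pi,pi)) (\<lambda>e::real\<times>real. cos (fst e * of_int a + snd e * of_int b))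
     = integral (cbox (-pi) pi) (\<lambda>x. integral (cbox (-pi) pi) (\<lambda>y. cos (fst (x,y) * of_int a + snd (x,y) * of_int b)))"
    by (rule integral_prod_continuous) (intro continuous_intros)
  also have "\<dots> = integral {-pi..pi} (\<lambda>x. if b = 0 then 2 * pi * cos (x * of_int a) else 0)"
    using int1d[of "_ * of_int a" b] by (simp add: cbox_interval)
  also have "\<dots> = (if a = 0 \<and> b = 0 then 4 * pi^2 else 0)"
    using int1d[of 0 a] by (cases "b = 0") (auto simp: power2_eq_square)
  finally show ?thesis .
qed

definition bx :: "(real \<times> real) set" where "bx = cbox (-pi,-pi) (pi,pi)"
definition Gr :: "nat \<Rightarrow> (int \<times> int) set" where "Gr M = {1..int M - 1} \<times> {1..int M - 1}"
definition Fb :: "real \<Rightarrow> real \<times> real \<Rightarrow> real" where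
  "Fb \<beta> e = (4 * (sin (fst e / 2))^2 + 4 * (sin (snd e / 2))^2) powr (\<beta> / 2)"
definition th :: "real \<times> real \<Rightarrow> int \<times> int \<Rightarrow> real" where
  "th e p = fst e * of_int (fst p) + snd e * of_int (snd p)"
definition zh :: "(int \<times> int) set \<Rightarrow> (int \<Rightarrow> int \<Rightarrow> real) \<Rightarrow> real \<times> real \<Rightarrow> complex" where
  "zh G \<psi> e = (\<Sum>p\<in>G. complex_of_real (\<psi> (fst p) (snd p)) * exp (- \<i> * complex_of_real (th e p)))"

lemma coeff_eq:
  "frac_coeff \<beta> l m = complex_of_real (1 / (4 * pi^2)) *
     integral bx (\<lambda>e. complex_of_real (Fb \<beta> e) * exp (- \<i> * complex_of_real (th e (l, m))))"
  unfolding frac_coeff_def Fb_def th_def bx_def by (simp add: case_prod_unfold)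

lemma cont_Fb: "0 < \<beta> \<Longrightarrow> continuous_on S (Fb \<beta>)"
  unfolding Fb_def
  by (intro continuous_on_powr' continuous_intros) auto

lemma Fb_nonneg: "0 \<le> Fb \<beta> e"
  unfolding Fb_def by simp

lemma cont_th: "continuous_on S (\<lambda>e. th e p)"
  unfolding th_def by (intro continuous_intros)

lemma th_diff: "th e (fst p - fst q, snd p - snd q) = th e p - th e q"
  by (simp add: th_def algebra_simps)

lemma zh_sq:
  assumes "finite G"
  shows "(\<Sum>q\<in>G. \<Sum>p\<in>G. complex_of_real (\<psi> (fst p) (snd p) * \<psi> (fst q) (snd q)) *
            exp (- \<i> * complex_of_real (th e p - th e q)))
         = complex_of_real ((cmod (zh G \<psi> e))^2)"
proof -
  have "complex_of_real ((cmod (zh G \<psi> e))^2) = zh G \<psi> e * cnj (zh G \<psi> e)"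
    by (rule complex_norm_square)
  also have "\<dots> = (\<Sum>p\<in>G. \<Sum>q\<in>G. complex_of_real (\<psi> (fst p) (snd p)) * exp (- \<i> * complex_of_real (th e p))
        * cnj (complex_of_real (\<psi> (fst q) (snd q)) * exp (- \<i> * complex_of_real (th e q))))"
    unfolding zh_def cnj_sum sum_product ..
  also have "\<dots> = (\<Sum>p\<in>G. \<Sum>q\<in>G. complex_of_real (\<psi> (fst p) (snd p) * \<psi> (fst q) (snd q)) *
            exp (- \<i> * complex_of_real (th e p - th e q)))"
  proof (intro sum.cong refl)
    fix p q
    have "cnj (exp (- \<i> * complex_of_real (th e q))) = exp (\<i> * complex_of_real (th e q))"
      by (simp add: exp_cnj)
    moreover have "exp (- \<i> * complex_of_real (th e p)) * exp (\<i> * complex_of_real (th e q))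
       = exp (- \<i> * complex_of_real (th e p - th e q))"
      by (simp add: exp_add[symmetric] algebra_simps)
    ultimately show "complex_of_real (\<psi> (fst p) (snd p)) * exp (- \<i> * complex_of_real (th e p))
        * cnj (complex_of_real (\<psi> (fst q) (snd q)) * exp (- \<i> * complex_of_real (th e q)))
      = complex_of_real (\<psi> (fst p) (snd p) * \<psi> (fst q) (snd q)) *
            exp (- \<i> * complex_of_real (th e p - th e q))"
      by (simp add: algebra_simps)
  qed
  also have "\<dots> = (\<Sum>q\<in>G. \<Sum>p\<in>G. complex_of_real (\<psi> (fst p) (snd p) * \<psi> (fst q) (snd q)) *
            exp (- \<i> * complex_of_real (th e p - th e q)))"
    by (rule sum.swap)
  finally show ?thesis by simp
qed

lemma main_id:
  assumes w: "continuous_on bx w" and G: "finite G"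
  shows "(\<Sum>q\<in>G. (\<Sum>p\<in>G. (complex_of_real (1 / (4 * pi^2)) *
            integral bx (\<lambda>e. complex_of_real (w e) * exp (- \<i> * complex_of_real (th e (fst p - fst q, snd p - snd q)))))
            * complex_of_real (\<psi> (fst p) (snd p))) * complex_of_real (\<psi> (fst q) (snd q)))
       = complex_of_real (1 / (4 * pi^2) * integral bx (\<lambda>e. w e * (cmod (zh G \<psi> e))^2))"
proof -
  define f where "f q p e = complex_of_real (\<psi> (fst p) (snd p) * \<psi> (fst q) (snd q)) *
     (complex_of_real (w e) * exp (- \<i> * complex_of_real (th e p - th e q)))" for q p e
  have cf: "continuous_on bx (f q p)" for q p
    unfolding f_def using w
    by (intro continuous_intros cont_th continuous_on_of_real) auto
  have if1: "f q p integrable_on bx" for q p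
    unfolding bx_def by (rule integrable_continuous) (use cf in \<open>simp add: bx_def\<close>)
  have if2: "(\<lambda>e. \<Sum>p\<in>G. f q p e) integrable_on bx" for q
    by (rule integrable_sum) (use G if1 in auto)
  have "(\<Sum>q\<in>G. (\<Sum>p\<in>G. (complex_of_real (1 / (4 * pi^2)) *
            integral bx (\<lambda>e. complex_of_real (w e) * exp (- \<i> * complex_of_real (th e (fst p - fst q, snd p - snd q)))))
            * complex_of_real (\<psi> (fst p) (snd p))) * complex_of_real (\<psi> (fst q) (snd q)))
     = complex_of_real (1 / (4 * pi^2)) * (\<Sum>q\<in>G. \<Sum>p\<in>G. integral bx (f q p))"
  proof -
    have fi: "integral bx (f q p) = complex_of_real (\<psi> (fst p) (snd p) * \<psi> (fst q) (snd q)) *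
       integral bx (\<lambda>e. complex_of_real (w e) * exp (- \<i> * complex_of_real (th e p - th e q)))" for q p
      unfolding f_def by (rule integral_mult_right)
    show ?thesis
      unfolding fi th_diff sum_distrib_left sum_distrib_right
      by (intro sum.cong refl) (simp add: mult_ac)
  qed
  also have "(\<Sum>q\<in>G. \<Sum>p\<in>G. integral bx (f q p)) = integral bx (\<lambda>e. \<Sum>q\<in>G. \<Sum>p\<in>G. f q p e)"
    using G if1 if2 by (simp add: integral_sum)
  also have "\<dots> = integral bx (\<lambda>e. complex_of_real (w e * (cmod (zh G \<psi> e))^2))"
  proof (rule integral_cong)
    fix e
    have "(\<Sum>q\<in>G. \<Sum>p\<in>G. f q p e) = complex_of_real (w e) * (\<Sum>q\<in>G. \<Sum>p\<in>G. complex_of_real (\<psi> (fst p) (snd p) * \<psi> (fst q) (snd q)) *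
            exp (- \<i> * complex_of_real (th e p - th e q)))"
      unfolding f_def sum_distrib_left by (simp add: algebra_simps)
    also have "\<dots> = complex_of_real (w e * (cmod (zh G \<psi> e))^2)"
      using zh_sq[OF G] by simp
    finally show "(\<Sum>q\<in>G. \<Sum>p\<in>G. f q p e) = complex_of_real (w e * (cmod (zh G \<psi> e))^2)" .
  qed
  also have "\<dots> = complex_of_real (integral bx (\<lambda>e. w e * (cmod (zh G \<psi> e))^2))"
  proof -
    have "(\<lambda>e. w e * (cmod (zh G \<psi> e))^2) integrable_on bx"
      unfolding bx_def
      by (rule integrable_continuous)
         (use w in \<open>simp add: bx_def zh_def, intro continuous_intros cont_th continuous_on_of_real\<close>)
    from integral_linear[OF this bounded_linear_of_real]
    show ?thesis by (simp add: o_def del: of_real_mult of_real_power)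
  qed
  finally show ?thesis by simp
qed

lemma cos_swap: "cos (a - b) = cos (b - a)"
  by (metis cos_minus minus_diff_eq)

lemma parseval:
  assumes G: "finite G"
  shows "integral bx (\<lambda>e. (cmod (zh G \<psi> e))^2) = 4 * pi^2 * (\<Sum>p\<in>G. (\<psi> (fst p) (snd p))^2)"
proof -
  define c where "c q p e = \<psi> (fst p) (snd p) * \<psi> (fst q) (snd q) *
      cos (th e p - th e q)" for q p e
  have pw: "(cmod (zh G \<psi> e))^2 = (\<Sum>q\<in>G. \<Sum>p\<in>G. c q p e)" for e
  proof -
    have "(cmod (zh G \<psi> e))^2 = Re (complex_of_real ((cmod (zh G \<psi> e))^2))" by simp
    also have "\<dots> = Re (\<Sum>q\<in>G. \<Sum>p\<in>G. complex_of_real (\<psi> (fst p) (snd p) * \<psi> (fst q) (snd q)) *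
            exp (- \<i> * complex_of_real (th e p - th e q)))"
      using zh_sq[OF G] by simp
    also have "\<dots> = (\<Sum>q\<in>G. \<Sum>p\<in>G. c q p e)"
      unfolding c_def Re_sum
      by (intro sum.cong refl) (simp add: Re_exp cos_swap)
    finally show ?thesis .
  qed
  have ci: "c q p integrable_on bx" for q p
    unfolding bx_def c_def th_def by (rule integrable_continuous) (intro continuous_intros)
  have ci2: "(\<lambda>e. \<Sum>p\<in>G. c q p e) integrable_on bx" for q
    by (rule integrable_sum) (use G ci in auto)
  have ic: "integral bx (c q p) = (if p = q then 4 * pi^2 * (\<psi> (fst q) (snd q))^2 else 0)" for q p
  proof -
    have "integral bx (c q p) = \<psi> (fst p) (snd p) * \<psi> (fst q) (snd q) *
       integral bx (\<lambda>e::real\<times>real. cos (fst e * of_int (fst p - fst q) + snd e * of_int (snd p - snd q)))"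
      unfolding c_def th_diff[symmetric] by (simp add: th_def)
    also have "\<dots> = (if p = q then 4 * pi^2 * (\<psi> (fst q) (snd q))^2 else 0)"
      unfolding bx_def int2d by (auto simp: prod_eq_iff power2_eq_square)
    finally show ?thesis .
  qed
  have "integral bx (\<lambda>e. (cmod (zh G \<psi> e))^2) = integral bx (\<lambda>e. \<Sum>q\<in>G. \<Sum>p\<in>G. c q p e)"
    using pw by simp
  also have "\<dots> = (\<Sum>q\<in>G. \<Sum>p\<in>G. integral bx (c q p))"
    using G ci ci2 by (simp add: integral_sum)
  also have "\<dots> = (\<Sum>q\<in>G. 4 * pi^2 * (\<psi> (fst q) (snd q))^2)"
    unfolding ic using G by (simp add: sum.delta')
  finally show ?thesis by (simp add: sum_distrib_left)
qed

lemma finite_Gr: "finite (Gr M)"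
  unfolding Gr_def by simp

lemma infsum_fin:
  assumes supp: "\<forall>j k. (j, k) \<notin> Gr M \<longrightarrow> \<psi> j k = 0"
  shows "infsum (\<lambda>(l, m). frac_coeff \<beta> l m * complex_of_real (\<psi> (j + l) (k + m))) UNIV
       = (\<Sum>p\<in>Gr M. frac_coeff \<beta> (fst p - j) (snd p - k) * complex_of_real (\<psi> (fst p) (snd p)))"
proof -
  define f where "f = (\<lambda>(l, m). frac_coeff \<beta> l m * complex_of_real (\<psi> (j + l) (k + m)))"
  define \<tau> where "\<tau> = (\<lambda>p::int\<times>int. (fst p - j, snd p - k))"
  have "infsum f UNIV = infsum f (\<tau> ` Gr M)"
  proof (rule infsum_cong_neutral)
    fix x assume x: "x \<in> UNIV - \<tau> ` Gr M"
    obtain l m where xl: "x = (l, m)" by (cases x)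
    have "(j + l, k + m) \<notin> Gr M"
    proof
      assume "(j + l, k + m) \<in> Gr M"
      then have "\<tau> (j + l, k + m) \<in> \<tau> ` Gr M" by blast
      then show False using x xl by (simp add: \<tau>_def)
    qed
    then show "f x = 0" using supp xl by (simp add: f_def)
  qed auto
  also have "\<dots> = sum f (\<tau> ` Gr M)"
    using finite_Gr by simp
  also have "\<dots> = sum (f \<circ> \<tau>) (Gr M)"
    by (rule sum.reindex) (auto simp: inj_on_def \<tau>_def prod_eq_iff)
  also have "\<dots> = (\<Sum>p\<in>Gr M. frac_coeff \<beta> (fst p - j) (snd p - k) * complex_of_real (\<psi> (fst p) (snd p)))"
    by (intro sum.cong refl) (simp add: f_def \<tau>_def case_prod_unfold)
  finally show ?thesis unfolding f_def .
qed

lemma Q_eq: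
  assumes supp: "\<forall>j k. (j, k) \<notin> Gr M \<longrightarrow> \<psi> j k = 0" and b: "0 < \<beta>"
  shows "grid_inner h M (frac_lap \<beta> h \<psi>) (\<lambda>j k. complex_of_real (\<psi> j k))
    = complex_of_real (h^2 * (1 / h powr \<beta>) * (1 / (4 * pi^2) * integral bx (\<lambda>e. Fb \<beta> e * (cmod (zh (Gr M) \<psi> e))^2)))"
proof -
  have "grid_inner h M (frac_lap \<beta> h \<psi>) (\<lambda>j k. complex_of_real (\<psi> j k))
     = complex_of_real (h^2) * (\<Sum>q\<in>Gr M. frac_lap \<beta> h \<psi> (fst q) (snd q) * complex_of_real (\<psi> (fst q) (snd q)))"
    unfolding grid_inner_def Gr_def by (simp add: sum.cartesian_product case_prod_unfold)
  also have "\<dots> = complex_of_real (h^2) * complex_of_real (1 / h powr \<beta>) *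
     (\<Sum>q\<in>Gr M. (\<Sum>p\<in>Gr M. (complex_of_real (1 / (4 * pi^2)) *
            integral bx (\<lambda>e. complex_of_real (Fb \<beta> e) * exp (- \<i> * complex_of_real (th e (fst p - fst q, snd p - snd q)))))
            * complex_of_real (\<psi> (fst p) (snd p))) * complex_of_real (\<psi> (fst q) (snd q)))"
  proof -
    have fl: "frac_lap \<beta> h \<psi> j k = complex_of_real (1 / h powr \<beta>) *
       (\<Sum>p\<in>Gr M. frac_coeff \<beta> (fst p - j) (snd p - k) * complex_of_real (\<psi> (fst p) (snd p)))" for j k
      unfolding frac_lap_def infsum_fin[OF supp] ..
    show ?thesis
      unfolding fl coeff_eq
      by (simp add: sum_distrib_left sum_distrib_right mult_ac)
  qed
  also have "\<dots> = complex_of_real (h^2) * complex_of_real (1 / h powr \<beta>) *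
     complex_of_real (1 / (4 * pi^2) * integral bx (\<lambda>e. Fb \<beta> e * (cmod (zh (Gr M) \<psi> e))^2))"
    by (subst main_id) (use cont_Fb[OF b] finite_Gr in auto)
  finally show ?thesis by simp
qed



lemma sq_powr: "0 \<le> (x::real) \<Longrightarrow> (x^2) powr (b/2) = x powr b"
proof (cases "x = 0")
  case False
  assume "0 \<le> x"
  with False have "x > 0" by simp
  then have "x^2 = x powr 2" using powr_realpow[of x 2] by simp
  then show ?thesis by (simp add: powr_powr)
qed simp

lemma sin_lb: fixes y :: real assumes "0 \<le> y" "y \<le> 1" shows "y / 2 \<le> sin y"
proof -
  have b: "\<bar>sin y - (\<Sum>m<3. sin_coeff m * y ^ m)\<bar> \<le> inverse (fact 3) * \<bar>y\<bar> ^ 3"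
    using Maclaurin_sin_bound[of y 3] .
  have s: "(\<Sum>m<3. sin_coeff m * y ^ m) = y"
    unfolding numeral_3_eq_3 lessThan_Suc by (simp add: sin_coeff_def)
  have f3: "fact 3 = (6::real)" unfolding numeral_3_eq_3 by (simp add: fact_Suc)
  have f: "inverse (fact 3) * \<bar>y\<bar> ^ 3 = y^3 / 6"
  proof -
    have "\<bar>y\<bar> = y" using assms by simp
    then show ?thesis unfolding f3 by simp
  qed
  have "y * y \<le> 1" using assms by (simp add: mult_le_one)
  then have "y * (y * y) \<le> y * 1" using assms by (intro mult_left_mono) auto
  then have c: "y^3 \<le> y" by (simp add: power3_eq_cube)
  have "\<bar>sin y - y\<bar> \<le> y^3 / 6" using b unfolding s f .
  with c assms show ?thesis by linarith
qed

lemma coord_lb: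
  assumes r: "0 < r" "r \<le> 1" and x: "r < \<bar>x\<bar>" "\<bar>x\<bar> \<le> pi"
  shows "(r/2)^2 \<le> 4 * (sin (x/2))^2"
proof -
  have eq: "(sin (x/2))^2 = (sin (\<bar>x\<bar>/2))^2"
    by (cases "x \<ge> 0") (auto simp: sin_minus)
  have m: "sin (r/2) \<le> sin (\<bar>x\<bar>/2)"
    by (rule sin_monotone_2pi_le) (use r x in auto)
  have l: "r/4 \<le> sin (r/2)" using sin_lb[of "r/2"] r by simp
  have "(r/4)^2 \<le> (sin (\<bar>x\<bar>/2))^2"
    by (rule power_mono) (use r m l in auto)
  moreover have "(r/2)^2 = 4 * (r/4)^2" by (simp add: power2_eq_square)
  ultimately show ?thesis using eq by linarith
qed

lemma Fb_le: "0 < \<beta> \<Longrightarrow> Fb \<beta> e \<le> 8 powr (\<beta>/2)"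
  unfolding Fb_def
proof (rule powr_mono2)
  have "(sin (fst e / 2))^2 \<le> 1" "(sin (snd e / 2))^2 \<le> 1" by (simp_all add: abs_square_le_1)
  then show "4 * (sin (fst e / 2))\<^sup>2 + 4 * (sin (snd e / 2))\<^sup>2 \<le> 8" by simp
qed auto

lemma Fb_ge:
  assumes b: "0 < \<beta>" and r: "0 < r" "r \<le> 1" and e: "e \<in> bx" "e \<notin> cbox (-r,-r) (r,r)"
  shows "(r/2) powr \<beta> \<le> Fb \<beta> e"
proof -
  obtain a b where ab: "e = (a, b)" by (cases e)
  have "\<bar>a\<bar> \<le> pi" "\<bar>b\<bar> \<le> pi" using e(1) by (auto simp: ab bx_def cbox_Pair_iff cbox_interval abs_le_iff)
  moreover have "r < \<bar>a\<bar> \<or> r < \<bar>b\<bar>" using e(2)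
    by (auto simp: ab cbox_Pair_iff cbox_interval abs_le_iff)
  ultimately have "(r/2)^2 \<le> 4 * (sin (a / 2))^2 + 4 * (sin (b / 2))^2"
  proof (elim disjE)
    assume "\<bar>a\<bar> \<le> pi" "r < \<bar>a\<bar>"
    then have "(r/2)^2 \<le> 4 * (sin (a / 2))^2" using coord_lb[OF r] by blast
    moreover have "0 \<le> 4 * (sin (b / 2))^2" by simp
    ultimately show ?thesis by linarith
  next
    assume "\<bar>b\<bar> \<le> pi" "r < \<bar>b\<bar>"
    then have "(r/2)^2 \<le> 4 * (sin (b / 2))^2" using coord_lb[OF r] by blast
    moreover have "0 \<le> 4 * (sin (a / 2))^2" by simp
    ultimately show ?thesis by linarith
  qed
  then have base: "(r/2)^2 \<le> 4 * (sin (fst e / 2))^2 + 4 * (sin (snd e / 2))^2" by (simp add: ab)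
  have "((r/2)^2) powr (\<beta>/2) \<le> Fb \<beta> e"
    unfolding Fb_def by (rule powr_mono2) (use b base in auto)
  moreover have "((r/2)^2) powr (\<beta>/2) = (r/2) powr \<beta>" by (rule sq_powr) (use r in simp)
  ultimately show ?thesis by simp
qed

lemma cont_Phi: "continuous_on S (\<lambda>e. (cmod (zh G \<psi> e))^2)"
  unfolding zh_def th_def by (intro continuous_intros)

lemma int_Phi: "(\<lambda>e. (cmod (zh G \<psi> e))^2) integrable_on bx"
  unfolding bx_def by (rule integrable_continuous) (rule cont_Phi)

lemma int_FPhi: "0 < \<beta> \<Longrightarrow> (\<lambda>e. Fb \<beta> e * (cmod (zh G \<psi> e))^2) integrable_on bx"
  unfolding bx_def by (rule integrable_continuous) (intro continuous_intros cont_Phi cont_Fb)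

lemma Phi_le: "(cmod (zh G \<psi> e))^2 \<le> (\<Sum>p\<in>G. \<bar>\<psi> (fst p) (snd p)\<bar>)^2"
proof -
  have "cmod (zh G \<psi> e) \<le> (\<Sum>p\<in>G. cmod (complex_of_real (\<psi> (fst p) (snd p)) * exp (- \<i> * complex_of_real (th e p))))"
    unfolding zh_def by (rule norm_sum)
  also have "\<dots> = (\<Sum>p\<in>G. \<bar>\<psi> (fst p) (snd p)\<bar>)"
    by (intro sum.cong refl) (simp add: norm_mult)
  finally show ?thesis by (intro power_mono) auto
qed

lemma I_upper:
  assumes G: "finite G" and b: "0 < \<beta>"
  shows "integral bx (\<lambda>e. Fb \<beta> e * (cmod (zh G \<psi> e))^2)
    \<le> 8 powr (\<beta>/2) * (4 * pi^2 * (\<Sum>p\<in>G. (\<psi> (fst p) (snd p))^2))"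
proof -
  have "integral bx (\<lambda>e. Fb \<beta> e * (cmod (zh G \<psi> e))^2) \<le> integral bx (\<lambda>e. 8 powr (\<beta>/2) * (cmod (zh G \<psi> e))^2)"
  proof (rule integral_le)
    show "(\<lambda>e. 8 powr (\<beta> / 2) * (cmod (zh G \<psi> e))\<^sup>2) integrable_on bx"
      using int_Phi by (rule integrable_on_cmult_left[where 'b=real, simplified])
  qed (use int_FPhi[OF b] Fb_le[OF b] in \<open>auto intro: mult_right_mono\<close>)
  also have "\<dots> = 8 powr (\<beta>/2) * (4 * pi^2 * (\<Sum>p\<in>G. (\<psi> (fst p) (snd p))^2))"
    by (simp add: parseval[OF G])
  finally show ?thesis .
qed

lemma I_lower:
  assumes G: "finite G" and b: "0 < \<beta>" and r: "0 < r" "r \<le> 1"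
  shows "(r/2) powr \<beta> * (4 * pi^2 * (\<Sum>p\<in>G. (\<psi> (fst p) (snd p))^2) - 4 * r^2 * (\<Sum>p\<in>G. \<bar>\<psi> (fst p) (snd p)\<bar>)^2)
     \<le> integral bx (\<lambda>e. Fb \<beta> e * (cmod (zh G \<psi> e))^2)"
proof -
  define \<tau> where "\<tau> = (r/2) powr \<beta>"
  define B where "B = (\<Sum>p\<in>G. \<bar>\<psi> (fst p) (snd p)\<bar>)^2"
  define S where "S = cbox (-r,-r) (r,r)"
  have Ssub: "S \<subseteq> bx" unfolding S_def bx_def
    using r pi_gt3 by (intro subset_box_imp) (auto simp: Basis_prod_def)
  have cS: "measure lborel S = 4 * r^2"
    unfolding S_def content_Pair using r by (simp add: cbox_interval power2_eq_square)
  have hi: "((\<lambda>e. if e \<in> S then \<tau> * B else 0) has_integral (4 * r^2 * (\<tau> * B))) bx"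
  proof -
    have "((\<lambda>e. \<tau> * B) has_integral (measure lborel S *\<^sub>R (\<tau> * B))) S"
      unfolding S_def by (rule has_integral_const)
    then show ?thesis
      using has_integral_restrict_closed_subinterval[of "\<lambda>e. \<tau> * B" _ "(-r,-r)" "(r,r)" "(-pi,-pi)" "(pi,pi)"] Ssub
      unfolding S_def bx_def cS[unfolded S_def] by simp
  qed
  have "integral bx (\<lambda>e. \<tau> * (cmod (zh G \<psi> e))^2 - (if e \<in> S then \<tau> * B else 0))
     \<le> integral bx (\<lambda>e. Fb \<beta> e * (cmod (zh G \<psi> e))^2)"
  proof (rule integral_le)
    show "(\<lambda>e. \<tau> * (cmod (zh G \<psi> e))^2 - (if e \<in> S then \<tau> * B else 0)) integrable_on bx"
      using hi int_Phi by (intro integrable_diff integrable_on_cmult_left[where 'b=real, simplified]) auto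
    show "(\<lambda>e. Fb \<beta> e * (cmod (zh G \<psi> e))^2) integrable_on bx" by (rule int_FPhi[OF b])
    fix e assume e: "e \<in> bx"
    show "\<tau> * (cmod (zh G \<psi> e))^2 - (if e \<in> S then \<tau> * B else 0) \<le> Fb \<beta> e * (cmod (zh G \<psi> e))^2"
    proof (cases "e \<in> S")
      case True
      have "\<tau> * (cmod (zh G \<psi> e))^2 \<le> \<tau> * B"
        unfolding B_def \<tau>_def by (intro mult_left_mono Phi_le) auto
      moreover have "0 \<le> Fb \<beta> e * (cmod (zh G \<psi> e))^2" by (simp add: Fb_nonneg)
      ultimately show ?thesis using True by simp
    next
      case False
      have "\<tau> \<le> Fb \<beta> e" unfolding \<tau>_def by (rule Fb_ge[OF b r e False[unfolded S_def]])
      then show ?thesis using False by (simp add: mult_right_mono)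
    qed
  qed
  moreover have "integral bx (\<lambda>e. \<tau> * (cmod (zh G \<psi> e))^2 - (if e \<in> S then \<tau> * B else 0))
     = \<tau> * (4 * pi^2 * (\<Sum>p\<in>G. (\<psi> (fst p) (snd p))^2)) - 4 * r^2 * (\<tau> * B)"
    using hi int_Phi parseval[OF G]
    by (subst integral_diff) (auto intro: integrable_on_cmult_left[where 'b=real, simplified] simp: integral_unique)
  ultimately show ?thesis unfolding \<tau>_def B_def by (simp add: algebra_simps)
qed

lemma card_Gr_le: "real (card (Gr M)) \<le> real M ^ 2"
proof -
  have "card (Gr M) = nat (int M - 1) * nat (int M - 1)"
    unfolding Gr_def by (simp add: card_cartesian_product)
  also have "\<dots> \<le> M * M" by (intro mult_mono) auto
  finally show ?thesis by (simp add: power2_eq_square flip: of_nat_mult)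
qed

lemma B_le: "(\<Sum>p\<in>Gr M. \<bar>\<psi> (fst p) (snd p)\<bar>)^2 \<le> real M ^ 2 * (\<Sum>p\<in>Gr M. (\<psi> (fst p) (snd p))^2)"
proof -
  have "(\<Sum>p\<in>Gr M. 1 * \<bar>\<psi> (fst p) (snd p)\<bar>)^2 \<le> (\<Sum>p\<in>Gr M. 1^2) * (\<Sum>p\<in>Gr M. \<bar>\<psi> (fst p) (snd p)\<bar>^2)"
    by (rule Cauchy_Schwarz_ineq_sum)
  also have "\<dots> = real (card (Gr M)) * (\<Sum>p\<in>Gr M. (\<psi> (fst p) (snd p))^2)" by simp
  also have "\<dots> \<le> real M ^ 2 * (\<Sum>p\<in>Gr M. (\<psi> (fst p) (snd p))^2)"
    by (rule mult_right_mono[OF card_Gr_le]) (simp add: sum_nonneg)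
  finally show ?thesis by simp
qed

theorem lemma2p10:
  fixes \<beta> L :: real
  assumes "1 < \<beta>" and "\<beta> < 2" and "0 < L"
  shows "\<exists>C > 0. \<forall>(M::nat) (\<psi>::int \<Rightarrow> int \<Rightarrow> real).
           M > 0 \<longrightarrow>
           (\<forall>j k. \<not> (1 \<le> j \<and> j \<le> int M - 1 \<and> 1 \<le> k \<and> k \<le> int M - 1) \<longrightarrow> \<psi> j k = 0) \<longrightarrow>
           (let h = 2 * L / real M;
                Q = Re (grid_inner h M (frac_lap \<beta> h \<psi>) (\<lambda>j k. complex_of_real (\<psi> j k)));
                N = grid_inner h M \<psi> \<psi>
            in C * (2 / pi) powr \<beta> * (2 powr ((\<beta> - 2) / 2) / (4 * pi^2)) * N \<le> Q
               \<and> Q \<le> 2 powr (\<beta> / 2) * pi powr \<beta> / h powr \<beta> * N)"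
proof -
  have b: "0 < \<beta>" using assms by simp
  define K where "K = (2 / pi) powr \<beta> * (2 powr ((\<beta> - 2) / 2) / (4 * pi^2))"
  define c0 where "c0 = 1/2 * (1 / (4 * L)) powr \<beta>"
  have Kpos: "K > 0" unfolding K_def by simp
  have c0pos: "c0 > 0" unfolding c0_def using assms by simp
  show ?thesis
  proof (intro exI[of _ "c0 / K"] conjI allI impI)
    show "c0 / K > 0" using Kpos c0pos by simp
    fix M :: nat and \<psi> :: "int \<Rightarrow> int \<Rightarrow> real"
    assume M: "M > 0"
      and supp0: "\<forall>j k. \<not> (1 \<le> j \<and> j \<le> int M - 1 \<and> 1 \<le> k \<and> k \<le> int M - 1) \<longrightarrow> \<psi> j k = 0"
    have supp: "\<forall>j k. (j, k) \<notin> Gr M \<longrightarrow> \<psi> j k = 0" using supp0 by (auto simp: Gr_def)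
    define h where "h = 2 * L / real M"
    have hpos: "h > 0" unfolding h_def using M assms by simp
    define S2 where "S2 = (\<Sum>p\<in>Gr M. (\<psi> (fst p) (snd p))^2)"
    define I where "I = integral bx (\<lambda>e. Fb \<beta> e * (cmod (zh (Gr M) \<psi> e))^2)"
    have S2nn: "S2 \<ge> 0" unfolding S2_def by (simp add: sum_nonneg)
    have Neq: "grid_inner h M \<psi> \<psi> = h^2 * S2"
      unfolding grid_inner_def S2_def Gr_def by (simp add: sum.cartesian_product case_prod_unfold power2_eq_square)
    have Qeq: "Re (grid_inner h M (frac_lap \<beta> h \<psi>) (\<lambda>j k. complex_of_real (\<psi> j k)))
        = h^2 * (1 / h powr \<beta>) * (1 / (4 * pi^2) * I)"
      unfolding Q_eq[OF supp b] I_def by simp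
    define A where "A = h^2 * (1 / h powr \<beta>) * (1 / (4 * pi^2))"
    have Apos: "A > 0" unfolding A_def using hpos by simp
    have QA: "h^2 * (1 / h powr \<beta>) * (1 / (4 * pi^2) * I) = A * I" unfolding A_def by simp
    have up: "h^2 * (1 / h powr \<beta>) * (1 / (4 * pi^2) * I) \<le> 2 powr (\<beta> / 2) * pi powr \<beta> / h powr \<beta> * (h^2 * S2)"
    proof -
      have "I \<le> 8 powr (\<beta>/2) * (4 * pi^2 * S2)"
        unfolding I_def S2_def by (rule I_upper[OF finite_Gr b])
      then have "A * I \<le> A * (8 powr (\<beta>/2) * (4 * pi^2 * S2))"
        using Apos by (intro mult_left_mono) auto
      also have "\<dots> = 8 powr (\<beta>/2) / h powr \<beta> * (h^2 * S2)"
        unfolding A_def by (simp add: field_simps)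
      also have "\<dots> \<le> 2 powr (\<beta> / 2) * pi powr \<beta> / h powr \<beta> * (h^2 * S2)"
      proof -
        have e4: "(4::real) powr (\<beta>/2) = 2 powr \<beta>" using sq_powr[of 2 \<beta>] by simp
        have "(8::real) powr (\<beta>/2) = 2 powr (\<beta>/2) * 4 powr (\<beta>/2)"
          using powr_mult[of 2 4 "\<beta>/2"] by simp
        also have "\<dots> = 2 powr (\<beta>/2) * 2 powr \<beta>" by (simp add: e4)
        also have "\<dots> \<le> 2 powr (\<beta>/2) * pi powr \<beta>"
          using pi_gt3 b by (intro mult_left_mono powr_mono2) auto
        finally have "(8::real) powr (\<beta>/2) \<le> 2 powr (\<beta>/2) * pi powr \<beta>" .
        then show ?thesis using hpos S2nn
          by (intro mult_right_mono divide_right_mono) auto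
      qed
      finally show ?thesis unfolding QA .
    qed
    have lo: "c0 * (h^2 * S2) \<le> h^2 * (1 / h powr \<beta>) * (1 / (4 * pi^2) * I)"
    proof -
      define r where "r = 1 / real M"
      have r: "0 < r" "r \<le> 1" unfolding r_def using M by auto
      have Bb: "4 * r^2 * (\<Sum>p\<in>Gr M. \<bar>\<psi> (fst p) (snd p)\<bar>)^2 \<le> 4 * S2"
      proof -
        have "4 * r^2 * (\<Sum>p\<in>Gr M. \<bar>\<psi> (fst p) (snd p)\<bar>)^2 \<le> 4 * r^2 * (real M ^ 2 * S2)"
          unfolding S2_def by (intro mult_left_mono B_le) auto
        also have "\<dots> = 4 * S2" unfolding r_def using M by (simp add: field_simps)
        finally show ?thesis .
      qed
      have "(r/2) powr \<beta> * (4 * pi^2 * S2 - 4 * r^2 * (\<Sum>p\<in>Gr M. \<bar>\<psi> (fst p) (snd p)\<bar>)^2) \<le> I"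
        unfolding I_def S2_def by (rule I_lower[OF finite_Gr b r])
      moreover have "(r/2) powr \<beta> * (2 * pi^2 * S2) \<le> (r/2) powr \<beta> * (4 * pi^2 * S2 - 4 * r^2 * (\<Sum>p\<in>Gr M. \<bar>\<psi> (fst p) (snd p)\<bar>)^2)"
      proof (rule mult_left_mono)
        have "3 * 3 \<le> pi * pi" using pi_gt3 by (intro mult_mono) auto
        then have "4 \<le> 2 * pi^2" by (simp add: power2_eq_square)
        then have "4 * S2 \<le> 2 * pi^2 * S2" using S2nn by (intro mult_right_mono) auto
        then show "2 * pi^2 * S2 \<le> 4 * pi^2 * S2 - 4 * r^2 * (\<Sum>p\<in>Gr M. \<bar>\<psi> (fst p) (snd p)\<bar>)^2"
          using Bb by linarith
      qed simp
      ultimately have "(r/2) powr \<beta> * (2 * pi^2 * S2) \<le> I" by linarith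
      then have "A * ((r/2) powr \<beta> * (2 * pi^2 * S2)) \<le> A * I"
        using Apos by (intro mult_left_mono) auto
      moreover have "A * ((r/2) powr \<beta> * (2 * pi^2 * S2)) = 1/2 * ((r/2) powr \<beta> / h powr \<beta>) * (h^2 * S2)"
        unfolding A_def by (simp add: field_simps)
      moreover have "(r/2) powr \<beta> / h powr \<beta> = (1 / (4 * L)) powr \<beta>"
      proof -
        have "r / 2 / h = 1 / (4 * L)" unfolding r_def h_def using M assms by (simp add: field_simps)
        then show ?thesis using r hpos by (simp flip: powr_divide)
      qed
      ultimately show ?thesis unfolding QA c0_def by simp
    qed
    have eqC: "c0 / K * (2 / pi) powr \<beta> * (2 powr ((\<beta> - 2) / 2) / (4 * pi^2)) = c0"
      using Kpos unfolding K_def by (simp add: field_simps)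
    show "let h = 2 * L / real M;
                Q = Re (grid_inner h M (frac_lap \<beta> h \<psi>) (\<lambda>j k. complex_of_real (\<psi> j k)));
                N = grid_inner h M \<psi> \<psi>
            in c0 / K * (2 / pi) powr \<beta> * (2 powr ((\<beta> - 2) / 2) / (4 * pi^2)) * N \<le> Q
               \<and> Q \<le> 2 powr (\<beta> / 2) * pi powr \<beta> / h powr \<beta> * N"
      unfolding Let_def h_def[symmetric] Qeq Neq eqC using up lo by simp
  qed
qed

end
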